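(* Let $m\ge1$, $\boldsymbol\gamma=(\gamma_1,\ldots,\gamma_m)\in\mathbb{N}^m$, $\boldsymbol f=(f_1,\ldots,f_{m+1})$ a tuple of arithmetic functions and $\xi:\mathbb{N}^m\to\mathbb{C}$. For every $n_1\in\mathbb{N}$ and all $n_2,\ldots,n_{m+1}\in\mathbb{N}$, \[ S^{\boldsymbol\gamma,\xi}_{\boldsymbol f}(n_1,\ldots,n_{m+1})=\sum_{l_2,\ldots,l_{m+1}=1}^{n_1}a_{n_1}(l_2,\ldots,l_{m+1})\,e(n_1,n_2l_2)\cdots e(n_1,n_{m+1}l_{m+1}) =\sum_{d_2,\ldots,d_{m+1}\mid n_1}\alpha_{n_1}(d_2,\ldots,d_{m+1})\,c(d_2,n_2)\cdots c(d_{m+1},n_{m+1}), \] where \[ a_{n_1}(l_2,\ldots,l_{m+1})=n_1^{-m}\,S^{{}^t\xi^{\boldsymbol\gamma}_{n_1}}_{{}^t\widetilde{\boldsymbol f}}(n_1,l_{m+1},\ldots,l_2),\qquad \alpha_{n_1}(d_2,\ldots,d_{m+1})=n_1^{-m}\,S^{{}^t\xi^{\boldsymbol\gamma}_{n_1}}_{{}^t\widetilde{\boldsymbol f}}\Bigl(n_1,\frac{n_1}{d_{m+1}},\ldots,\frac{n_1}{d_2}\Bigr). \] (These are the unique finite Fourier coefficients of $(n_2,\ldots,n_{m+1})\mapsto S^{\boldsymbol\gamma,\xi}_{\boldsymbol f}(n_1,\ldots,n_{m+1})$.)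
   Context: An arithmetic function is a map $f:\mathbb{N}\to\mathbb{C}$, with $f(x)=0$ for $x\notin\mathbb{N}$. $\delta^x(n):=n^x$. For $\gamma\in\mathbb{N}$, $a_\gamma(n)=1$ if $n$ is a $\gamma$-th power of a positive integer and $0$ otherwise. $e(r,n):=\exp(2\pi\sqrt{-1}\,n/r)$, and $c(k,n):=\sum_{d\mid\gcd(k,n)}\mu(k/d)\,d$ is the Ramanujan sum ($\mu$ the Möbius function). For $\boldsymbol\gamma\in\mathbb{N}^m$, arithmetic functions $g_1,\ldots,g_{m+1}$ and a weight $\eta:\mathbb{N}^m\to\mathbb{C}$, define \[ S^{\boldsymbol\gamma,\eta}_{g_1,\ldots,g_{m+1}}(n_1,\ldots,n_{m+1}):=\sum_{\substack{(d_1,\ldots,d_m)\in\mathbb{N}^m\\ d_j^{\gamma_j}\mid\gcd(n_1,\ldots,n_{j+1})\ (1\le j\le m)}}\eta(d_1^{\gamma_1},\ldots,d_m^{\gamma_m})\, g_1\Bigl(\frac{n_1}{d_1^{\gamma_1}}\Bigr)g_2\Bigl(\frac{d_1^{\gamma_1}}{d_2^{\gamma_2}}\Bigr)\cdots g_m\Bigl(\frac{d_{m-1}^{\gamma_{m-1}}}{d_m^{\gamma_m}}\Bigr)g_{m+1}\bigl(d_m^{\gamma_m}\bigr), \] and write $S^{\eta}_{g_1,\ldots,g_{m+1}}:=S^{(1,\ldots,1),\eta}_{g_1,\ldots,g_{m+1}}$. For $\boldsymbol f=(f_1,\ldots,f_{m+1})$ set ${}^t\widetilde{\boldsymbol f}:=(\delta^0f_{m+1},\delta^1f_m,\ldots,\delta^mf_1)$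 (products of functions taken pointwise), and for $n\in\mathbb{N}$ set \[ {}^t\xi^{\boldsymbol\gamma}_n(d_1,\ldots,d_m):=\Bigl(\prod_{j=1}^m a_{\gamma_j}\Bigl(\frac{n}{d_{m+1-j}}\Bigr)\Bigr)\,\xi\Bigl(\frac{n}{d_m},\ldots,\frac{n}{d_1}\Bigr) \] (only values with $d_j\mid n$ are used). *)

theory Defs
  imports Complex_Main "HOL-Computational_Algebra.Squarefree"
begin

(* Tuples in N^k are represented as lists of length k (0-indexed: entry j of the
   list is the (j+1)-th coordinate).  Arithmetic functions are nat => complex;
   only positive arguments are ever relevant. *)

(* value of an arithmetic function g at the rational number a/b:
   g(a/b) if b divides a, and 0 otherwise (convention f(x)=0 for x not in N) *)
definition arith_at :: "(nat \<Rightarrow> complex) \<Rightarrow> nat \<Rightarrow> nat \<Rightarrow> complex" where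
  "arith_at g a b = (if b dvd a then g (a div b) else 0)"

definition a_pow :: "nat \<Rightarrow> nat \<Rightarrow> complex" where
  "a_pow \<gamma> n = (if \<exists>r::nat. 0 < r \<and> r ^ \<gamma> = n then 1 else 0)"

definition e_fun :: "nat \<Rightarrow> nat \<Rightarrow> complex" where
  "e_fun r n = exp (2 * pi * \<i> * of_nat n / of_nat r)"

definition moebius :: "nat \<Rightarrow> int" where
  "moebius n = (if n = 0 then 0 else if squarefree n then (-1) ^ card (prime_factors n) else 0)"

definition ramanujan :: "nat \<Rightarrow> nat \<Rightarrow> complex" where
  "ramanujan k n = (\<Sum>d\<in>{d. d dvd gcd k n}. of_int (moebius (k div d)) * of_nat d)"

(* S^{gamma,eta}_{g_1..g_{m+1}}(n_1..n_{m+1}); gam has length m, g and ns have length m+1.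
   The summation variable ds = (d_1..d_m), D = (d_1^gamma_1, .., d_m^gamma_m),
   Q = (n_1, D_1, .., D_m, 1), and the product is prod_{i=1}^{m+1} g_i(Q_i / Q_{i+1}). *)
definition S_fun :: "nat list \<Rightarrow> (nat list \<Rightarrow> complex) \<Rightarrow> (nat \<Rightarrow> complex) list \<Rightarrow> nat list \<Rightarrow> complex" where
  "S_fun gam \<eta> g ns =
    (let m = length gam in
     \<Sum>ds\<in>{ds. length ds = m \<and>
              (\<forall>j<m. 0 < ds ! j \<and> (ds ! j) ^ (gam ! j) dvd Gcd (set (take (j + 2) ns)))}.
       (let D = map (\<lambda>j. (ds ! j) ^ (gam ! j)) [0..<m];
            Q = (ns ! 0) # D @ [1]
        in \<eta> D * (\<Prod>i<m + 1. arith_at (g ! i) (Q ! i) (Q ! (i + 1)))))"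

definition S1_fun :: "nat \<Rightarrow> (nat list \<Rightarrow> complex) \<Rightarrow> (nat \<Rightarrow> complex) list \<Rightarrow> nat list \<Rightarrow> complex" where
  "S1_fun m \<eta> g ns = S_fun (replicate m 1) \<eta> g ns"

(* ^t(f~) = (delta^0 f_{m+1}, delta^1 f_m, .., delta^m f_1) for f = (f_1..f_{m+1}) *)
definition f_tilde_t :: "(nat \<Rightarrow> complex) list \<Rightarrow> (nat \<Rightarrow> complex) list" where
  "f_tilde_t f = (let m = length f - 1 in
     map (\<lambda>k x. of_nat x ^ k * (f ! (m - k)) x) [0..<m + 1])"

(* ^t xi^gamma_n (d_1..d_m) = (prod_{j=1}^m a_{gamma_j}(n/d_{m+1-j})) xi(n/d_m, .., n/d_1)
   (only used for d_j dividing n) *)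
definition xi_t :: "nat list \<Rightarrow> (nat list \<Rightarrow> complex) \<Rightarrow> nat \<Rightarrow> nat list \<Rightarrow> complex" where
  "xi_t gam \<xi> n ds = (let m = length gam in
     (\<Prod>j<m. a_pow (gam ! j) (n div (ds ! (m - 1 - j)))) * \<xi> (map (\<lambda>d. n div d) (rev ds)))"

end

theory Submission
  imports Defs
begin


lemma omega_eq_1_imp_dvd:
  fixes D x :: nat
  assumes "0 < D" and "exp (2 * pi * \<i> * of_nat x / of_nat D) = (1::complex)"
  shows "D dvd x"
proof -
  define \<theta> where "\<theta> = 2 * pi * real x / real D"
  have "exp (2 * pi * \<i> * of_nat x / of_nat D) = cis \<theta>"
    unfolding cis_conv_exp \<theta>_def by (simp add: field_simps)
  with assms have "cis \<theta> = 1" by simp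
  then have "cos \<theta> = 1" by (metis Re_complex_of_real cis.sel(1) of_real_1)
  then obtain k :: int where k: "\<theta> = real_of_int k * 2 * pi" using cos_one_2pi_int by blast
  then have "real x = real_of_int k * real D" using assms(1) unfolding \<theta>_def
    by (simp add: field_simps)
  then have "int x = k * int D" by (metis of_int_eq_iff of_int_mult of_int_of_nat_eq)
  then show ?thesis by (metis dvd_triv_right int_dvd_int_iff)
qed

lemma omega_pow:
  fixes D x k :: nat
  assumes "0 < D"
  shows "exp (2 * pi * \<i> * of_nat x / of_nat D) ^ k = exp (2 * pi * \<i> * of_nat (x*k) / of_nat D)"
proof -
  have "exp (2 * pi * \<i> * of_nat x / of_nat D) ^ k = exp (of_nat k * (2 * pi * \<i> * of_nat x / of_nat D))"
    by (rule exp_of_nat_mult[symmetric])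
  also have "of_nat k * (2 * pi * \<i> * of_nat x / of_nat D) = 2 * pi * \<i> * of_nat (x*k) / (of_nat D :: complex)"
    by (simp add: algebra_simps)
  finally show ?thesis .
qed

lemma omega_D:
  fixes D x :: nat
  assumes "0 < D"
  shows "exp (2 * pi * \<i> * of_nat x / of_nat D) ^ D = (1::complex)"
proof -
  have "exp (2 * pi * \<i> * of_nat x / of_nat D) ^ D = exp (of_nat x * (2 * pi * \<i>))"
    using assms by (subst exp_of_nat_mult[symmetric]) (simp add: field_simps)
  also have "\<dots> = 1" by (simp add: exp_of_nat_mult exp_two_pi_i)
  finally show ?thesis .
qed

lemma geom_root:
  fixes D x :: nat
  assumes "0 < D"
  shows "(\<Sum>k\<in>{1..D}. exp (2 * pi * \<i> * of_nat x / of_nat D) ^ k) = (if D dvd x then of_nat D else 0)"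
proof -
  define w where "w = exp (2 * pi * \<i> * of_nat x / of_nat D)"
  have wD: "w ^ D = 1" using omega_D[OF assms] unfolding w_def .
  have "(\<Sum>k\<in>{1..D}. w ^ k) = (\<Sum>k\<in>{Suc 0..<Suc D}. w ^ k)"
    by (metis One_nat_def atLeastLessThanSuc_atLeastAtMost)
  also have "\<dots> = (\<Sum>k\<in>{0..<D}. w ^ Suc k)" by (rule sum.shift_bounds_Suc_ivl)
  also have "\<dots> = w * (\<Sum>k<D. w ^ k)" by (simp add: atLeast0LessThan sum_distrib_left)
  finally have s: "(\<Sum>k\<in>{1..D}. w ^ k) = w * (\<Sum>k<D. w ^ k)" .
  show ?thesis
  proof (cases "D dvd x")
    case True
    then obtain t where "x = D * t" by blast
    then have "w = exp (of_nat t * (2 * pi * \<i>))" unfolding w_def using assms by (simp add: field_simps)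
    then have "w = 1" by (simp add: exp_of_nat_mult exp_two_pi_i)
    then show ?thesis using True s w_def by simp
  next
    case False
    then have "w \<noteq> 1" using omega_eq_1_imp_dvd[OF assms] unfolding w_def by blast
    then have "(\<Sum>k<D. w ^ k) = 0" using geometric_sum[of w D] wD by simp
    then show ?thesis using False s w_def by simp
  qed
qed

lemma fourier:
  fixes D n1 x :: nat
  assumes "0 < D" "D dvd n1" "0 < n1"
  shows "(\<Sum>l\<in>{1..n1}. if (n1 div D) dvd l then e_fun n1 (x*l) else 0) = (if D dvd x then of_nat D else 0)"
proof -
  define c where "c = n1 div D"
  have n1: "n1 = c * D" using assms c_def by simp
  have c0: "0 < c" using n1 assms by (metis mult_eq_0_iff neq0_conv)
  have "(\<Sum>l\<in>{1..n1}. if c dvd l then e_fun n1 (x*l) else 0) = (\<Sum>l\<in>{l\<in>{1..n1}. c dvd l}. e_fun n1 (x*l))"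
    by (rule sum.inter_filter[symmetric]) simp
  also have "{l\<in>{1..n1}. c dvd l} = (\<lambda>k. c*k) ` {1..D}"
  proof (rule set_eqI, rule iffI)
    fix l assume "l \<in> {l\<in>{1..n1}. c dvd l}"
    then obtain k where k: "l = c * k" "1 \<le> l" "l \<le> c * D" using n1 by auto
    then have "1 \<le> k" "k \<le> D" using c0 by (auto simp: Suc_le_eq) 
    then show "l \<in> (\<lambda>k. c*k) ` {1..D}" using k by auto
  next
    fix l assume "l \<in> (\<lambda>k. c*k) ` {1..D}"
    then show "l \<in> {l\<in>{1..n1}. c dvd l}" using n1 c0 by auto
  qed
  also have "(\<Sum>l\<in>(\<lambda>k. c*k) ` {1..D}. e_fun n1 (x*l)) = (\<Sum>k\<in>{1..D}. e_fun n1 (x*(c*k)))"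
    using c0 by (subst sum.reindex) (auto simp: inj_on_def)
  also have "\<dots> = (\<Sum>k\<in>{1..D}. exp (2 * pi * \<i> * of_nat x / of_nat D) ^ k)"
  proof (rule sum.cong[OF refl])
    fix k assume "k \<in> {1..D}"
    have "e_fun n1 (x*(c*k)) = exp (2 * pi * \<i> * of_nat (x*k) / of_nat D)"
      unfolding e_fun_def n1 using c0 by (simp add: field_simps)
    then show "e_fun n1 (x*(c*k)) = exp (2 * pi * \<i> * of_nat x / of_nat D) ^ k"
      using omega_pow[OF assms(1)] by simp
  qed
  also have "\<dots> = (if D dvd x then of_nat D else 0)" by (rule geom_root[OF assms(1)])
  finally show ?thesis unfolding c_def .
qed


lemma moebius_1: "moebius 1 = 1"
  by (simp add: moebius_def squarefree_1)

lemma moebius_mult_prime: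
  fixes p d :: nat
  assumes p: "prime p" and nd: "\<not> p dvd d" and d0: "0 < d"
  shows "moebius (p * d) = - moebius d"
proof -
  have cop: "coprime p d" using p nd by (simp add: prime_imp_coprime)
  have sq: "squarefree (p*d) \<longleftrightarrow> squarefree d"
    using squarefree_multD(2)[of p d] squarefree_mult_coprime[OF cop squarefree_prime[OF p]] by blast
  have pf: "prime_factors (p*d) = insert p (prime_factors d)"
    using prime_factors_product[of p d] p d0 prime_prime_factors[OF p] by (auto simp: prime_gt_0_nat)
  have "p \<notin> prime_factors d" using nd by (auto simp: in_prime_factors_iff)
  then have cd: "card (prime_factors (p*d)) = Suc (card (prime_factors d))" by (simp add: pf)
  have pd0: "p * d \<noteq> 0" using p d0 by (simp add: prime_gt_0_nat)
  show ?thesis unfolding moebius_def using pd0 d0 sq cd by simp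
qed

lemma moebius_sq:
  fixes p d :: nat
  assumes p: "prime p" and "p * p dvd d"
  shows "moebius d = 0"
proof -
  have "\<not> squarefree d" using assms by (intro not_squarefreeI[of p]) (auto simp: power2_eq_square)
  then show ?thesis by (simp add: moebius_def)
qed

lemma moebius_sum:
  fixes N :: nat
  assumes "0 < N"
  shows "(\<Sum>\<delta>\<in>{\<delta>. \<delta> dvd N}. moebius \<delta>) = (if N = 1 then 1 else 0)"
proof (cases "N = 1")
  case True
  then show ?thesis using moebius_1 by simp
next
  case False
  then obtain p where p: "prime p" "p dvd N" using prime_factor_nat by blast
  have p0: "0 < p" using p by (simp add: prime_gt_0_nat)
  define A where "A = {\<delta>. \<delta> dvd N \<and> \<not> p dvd \<delta>}"
  define B where "B = {\<delta>. \<delta> dvd N \<and> p dvd \<delta>}"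
  have finD: "finite {\<delta>. \<delta> dvd N}" using assms by simp
  have finA: "finite A" "finite B" unfolding A_def B_def using finD by (auto intro: rev_finite_subset)
  have "{\<delta>. \<delta> dvd N} = A \<union> B" "A \<inter> B = {}" unfolding A_def B_def by auto
  then have s1: "(\<Sum>\<delta>\<in>{\<delta>. \<delta> dvd N}. moebius \<delta>) = sum moebius A + sum moebius B"
    using finA by (simp add: sum.union_disjoint)
  have sub: "(\<lambda>d. p*d) ` A \<subseteq> B"
  proof
    fix x assume "x \<in> (\<lambda>d. p*d) ` A"
    then obtain d where d: "x = p*d" "d dvd N" "\<not> p dvd d" unfolding A_def by auto
    have "coprime p d" using p d by (simp add: prime_imp_coprime)
    then have "p * d dvd N" using p d by (simp add: divides_mult)
    then show "x \<in> B" unfolding B_def using d by simp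
  qed
  have "sum moebius B = sum moebius ((\<lambda>d. p*d) ` A)"
  proof (rule sum.mono_neutral_right[OF finA(2) sub, symmetric, THEN sym], rule ballI)
    fix x assume x: "x \<in> B - (\<lambda>d. p*d) ` A"
    then obtain d where d: "x = p*d" unfolding B_def by auto
    have "d dvd N" using x d unfolding B_def by (metis (mono_tags) DiffD1 dvd_mult_right mem_Collect_eq)
    then have "p dvd d" using x d unfolding A_def by auto
    then have "p * p dvd x" using d by simp
    then show "moebius x = 0" using moebius_sq[OF p(1)] by blast
  qed
  also have "\<dots> = (\<Sum>d\<in>A. moebius (p*d))"
    using p0 by (subst sum.reindex) (auto simp: inj_on_def)
  also have "\<dots> = (\<Sum>d\<in>A. - moebius d)"
  proof (rule sum.cong[OF refl])
    fix d assume "d \<in> A"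
    then have "d dvd N" "\<not> p dvd d" unfolding A_def by auto
    moreover have "0 < d" using \<open>d dvd N\<close> assms by (metis dvd_0_left_iff neq0_conv)
    ultimately show "moebius (p*d) = - moebius d" using moebius_mult_prime[OF p(1)] by blast
  qed
  finally show ?thesis using s1 False by (simp add: sum_negf)
qed


lemma gcd_indicator:
  fixes n1 c d l :: nat
  assumes n1: "n1 = c * d" and c0: "0 < c" and d0: "0 < d"
  shows "(if gcd n1 l = c then 1 else 0 :: complex) =
         (\<Sum>\<delta>\<in>{\<delta>. \<delta> dvd d}. of_int (moebius \<delta>) * (if c * \<delta> dvd l then 1 else 0))"
proof (cases "c dvd l")
  case False
  then have "gcd n1 l \<noteq> c" by (metis gcd_dvd2)
  moreover have "\<forall>\<delta>. \<not> c * \<delta> dvd l" using False by (meson dvd_mult_left)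
  ultimately show ?thesis by simp
next
  case True
  then obtain l' where l: "l = c * l'" by blast
  have g: "gcd n1 l = c * gcd d l'" unfolding n1 l by (simp add: gcd_mult_distrib_nat)
  have g0: "0 < gcd d l'" using d0 by simp
  have "(\<Sum>\<delta>\<in>{\<delta>. \<delta> dvd d}. of_int (moebius \<delta>) * (if c * \<delta> dvd l then 1 else 0 :: complex))
      = (\<Sum>\<delta>\<in>{\<delta>. \<delta> dvd d}. if \<delta> dvd l' then of_int (moebius \<delta>) else 0)"
    unfolding l using c0 by (intro sum.cong) auto
  also have "\<dots> = (\<Sum>\<delta>\<in>{\<delta>\<in>{\<delta>. \<delta> dvd d}. \<delta> dvd l'}. of_int (moebius \<delta>))"
    using d0 by (subst sum.inter_filter) auto
  also have "{\<delta>\<in>{\<delta>. \<delta> dvd d}. \<delta> dvd l'} = {\<delta>. \<delta> dvd gcd d l'}" by auto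
  also have "(\<Sum>\<delta>\<in>{\<delta>. \<delta> dvd gcd d l'}. of_int (moebius \<delta>) :: complex) = of_int (\<Sum>\<delta>\<in>{\<delta>. \<delta> dvd gcd d l'}. moebius \<delta>)"
    by simp
  also have "\<dots> = (if gcd d l' = 1 then 1 else 0)" using moebius_sum[OF g0] by simp
  also have "(gcd d l' = 1) \<longleftrightarrow> (gcd n1 l = c)" using g c0 by simp
  finally show ?thesis by simp
qed

lemma ramanujan_sum:
  fixes n1 d x :: nat
  assumes n10: "0 < n1" and dd: "d dvd n1"
  shows "(\<Sum>l\<in>{1..n1}. if n1 div gcd n1 l = d then e_fun n1 (x*l) else 0) = ramanujan d x"
proof -
  define c where "c = n1 div d"
  have d0: "0 < d" using dd n10 by (metis dvd_0_left_iff neq0_conv)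
  have n1: "n1 = c * d" using dd c_def by simp
  have c0: "0 < c" using n1 n10 by (metis mult_is_0 neq0_conv)
  have eqv: "n1 div gcd n1 l = d \<longleftrightarrow> gcd n1 l = c" for l
  proof
    assume a: "n1 div gcd n1 l = d"
    have e1: "n1 = gcd n1 l * d" using a by (metis dvd_mult_div_cancel gcd_dvd1)
    show "gcd n1 l = c" using e1 n1 d0 by (metis mult_right_cancel neq0_conv)
  next
    assume "gcd n1 l = c" then show "n1 div gcd n1 l = d" using n1 c0 by simp
  qed
  have "(\<Sum>l\<in>{1..n1}. if n1 div gcd n1 l = d then e_fun n1 (x*l) else 0)
      = (\<Sum>l\<in>{1..n1}. (if gcd n1 l = c then 1 else 0) * e_fun n1 (x*l))"
    by (intro sum.cong) (auto simp: eqv)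
  also have "\<dots> = (\<Sum>l\<in>{1..n1}. \<Sum>\<delta>\<in>{\<delta>. \<delta> dvd d}. of_int (moebius \<delta>) * ((if c * \<delta> dvd l then 1 else 0) * e_fun n1 (x*l)))"
    by (simp add: gcd_indicator[OF n1 c0 d0] sum_distrib_right mult.assoc)
  also have "\<dots> = (\<Sum>\<delta>\<in>{\<delta>. \<delta> dvd d}. of_int (moebius \<delta>) * (\<Sum>l\<in>{1..n1}. if n1 div (d div \<delta>) dvd l then e_fun n1 (x*l) else 0))"
  proof -
    have "(\<Sum>l\<in>{1..n1}. \<Sum>\<delta>\<in>{\<delta>. \<delta> dvd d}. of_int (moebius \<delta>) * ((if c * \<delta> dvd l then 1 else 0) * e_fun n1 (x*l)))
        = (\<Sum>\<delta>\<in>{\<delta>. \<delta> dvd d}. \<Sum>l\<in>{1..n1}. of_int (moebius \<delta>) * ((if c * \<delta> dvd l then 1 else 0) * e_fun n1 (x*l)))"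
      by (rule sum.swap)
    also have "\<dots> = (\<Sum>\<delta>\<in>{\<delta>. \<delta> dvd d}. of_int (moebius \<delta>) * (\<Sum>l\<in>{1..n1}. if n1 div (d div \<delta>) dvd l then e_fun n1 (x*l) else 0))"
    proof (rule sum.cong[OF refl])
      fix \<delta> assume "\<delta> \<in> {\<delta>. \<delta> dvd d}"
      then obtain t where t: "d = \<delta> * t" by auto
      then have "\<delta> > 0" using d0 by (metis mult_is_0 neq0_conv)
      then have "n1 div (d div \<delta>) = c * \<delta>" using t n1 d0 by simp
      then show "(\<Sum>l\<in>{1..n1}. of_int (moebius \<delta>) * ((if c * \<delta> dvd l then 1 else 0) * e_fun n1 (x*l)))
         = of_int (moebius \<delta>) * (\<Sum>l\<in>{1..n1}. if n1 div (d div \<delta>) dvd l then e_fun n1 (x*l) else 0)"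
        by (simp add: sum_distrib_left) (intro sum.cong, auto)
    qed
    finally show ?thesis .
  qed
  also have "\<dots> = (\<Sum>\<delta>\<in>{\<delta>. \<delta> dvd d}. of_int (moebius \<delta>) * (if (d div \<delta>) dvd x then of_nat (d div \<delta>) else 0))"
  proof (rule sum.cong[OF refl])
    fix \<delta> assume "\<delta> \<in> {\<delta>. \<delta> dvd d}"
    then obtain t where t: "d = \<delta> * t" by auto
    then have "0 < t" "d div \<delta> = t" using d0 by auto
    moreover have "t dvd n1" using t n1 by simp
    ultimately show "of_int (moebius \<delta>) * (\<Sum>l\<in>{1..n1}. if n1 div (d div \<delta>) dvd l then e_fun n1 (x*l) else 0)
       = of_int (moebius \<delta>) * (if (d div \<delta>) dvd x then of_nat (d div \<delta>) else 0)"
      using fourier[OF _ _ n10, of t x] by simp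
  qed
  also have "\<dots> = (\<Sum>e\<in>{e. e dvd d}. of_int (moebius (d div e)) * (if e dvd x then of_nat e else 0))"
    by (rule sum.reindex_bij_witness[of _ "\<lambda>e. d div e" "\<lambda>e. d div e"]) (use d0 in \<open>auto simp: div_div_eq_right\<close>)
  also have "\<dots> = (\<Sum>e\<in>{e. e dvd gcd d x}. of_int (moebius (d div e)) * of_nat e)"
    using d0 by (intro sum.mono_neutral_cong_right) auto
  finally show ?thesis unfolding ramanujan_def .
qed


lemma prod_sum_lists:
  fixes g :: "nat \<Rightarrow> nat \<Rightarrow> complex"
  shows "(\<Prod>j<m. \<Sum>l\<in>A j. g j l) = (\<Sum>ls\<in>{ls. length ls = m \<and> (\<forall>j<m. ls!j \<in> A j)}. \<Prod>j<m. g j (ls!j))"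
proof (induction m arbitrary: A g)
  case 0
  have "{ls. length ls = 0 \<and> (\<forall>j<0. ls!j \<in> A j)} = {[]}" by auto
  then show ?case by simp
next
  case (Suc m)
  have seteq: "{ls. length ls = Suc m \<and> (\<forall>j<Suc m. ls!j \<in> A j)} =
     (\<lambda>(x,ls). x # ls) ` (A 0 \<times> {ls. length ls = m \<and> (\<forall>j<m. ls!j \<in> A (Suc j))})"
  proof (rule set_eqI, rule iffI)
    fix ls assume a: "ls \<in> {ls. length ls = Suc m \<and> (\<forall>j<Suc m. ls!j \<in> A j)}"
    then obtain x ls' where ls: "ls = x # ls'" by (cases ls) auto
    have "x \<in> A 0" using a ls by auto
    moreover have "ls' \<in> {ls. length ls = m \<and> (\<forall>j<m. ls!j \<in> A (Suc j))}" using a ls by auto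
    ultimately show "ls \<in> (\<lambda>(x,ls). x # ls) ` (A 0 \<times> {ls. length ls = m \<and> (\<forall>j<m. ls!j \<in> A (Suc j))})"
      using ls by blast
  next
    fix ls assume "ls \<in> (\<lambda>(x,ls). x # ls) ` (A 0 \<times> {ls. length ls = m \<and> (\<forall>j<m. ls!j \<in> A (Suc j))})"
    then show "ls \<in> {ls. length ls = Suc m \<and> (\<forall>j<Suc m. ls!j \<in> A j)}"
      by (auto simp: less_Suc_eq_0_disj)
  qed
  have "(\<Sum>ls\<in>{ls. length ls = Suc m \<and> (\<forall>j<Suc m. ls!j \<in> A j)}. \<Prod>j<Suc m. g j (ls!j))
     = (\<Sum>(x,ls)\<in>A 0 \<times> {ls. length ls = m \<and> (\<forall>j<m. ls!j \<in> A (Suc j))}. \<Prod>j<Suc m. g j ((x#ls)!j))"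
    unfolding seteq by (subst sum.reindex) (auto simp: inj_on_def case_prod_beta)
  also have "\<dots> = (\<Sum>x\<in>A 0. \<Sum>ls\<in>{ls. length ls = m \<and> (\<forall>j<m. ls!j \<in> A (Suc j))}. g 0 x * (\<Prod>j<m. g (Suc j) (ls!j)))"
    by (simp add: sum.cartesian_product prod.lessThan_Suc_shift del: prod.lessThan_Suc)
  also have "\<dots> = (\<Sum>l\<in>A 0. g 0 l) * (\<Sum>ls\<in>{ls. length ls = m \<and> (\<forall>j<m. ls!j \<in> A (Suc j))}. \<Prod>j<m. g (Suc j) (ls!j))"
    by (simp add: sum_product)
  also have "\<dots> = (\<Sum>l\<in>A 0. g 0 l) * (\<Prod>j<m. \<Sum>l\<in>A (Suc j). g (Suc j) l)"
    using Suc.IH[of "\<lambda>j. g (Suc j)" "\<lambda>j. A (Suc j)"] by simp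
  also have "\<dots> = (\<Prod>j<Suc m. \<Sum>l\<in>A j. g j l)" by (simp add: prod.lessThan_Suc_shift del: prod.lessThan_Suc)
  finally show ?case by simp
qed

lemma chain_dvd:
  fixes q :: "nat \<Rightarrow> nat"
  assumes "\<forall>k<N. q (Suc k) dvd q k" "i \<le> j" "j \<le> N"
  shows "q j dvd q i"
  using assms(2,3)
proof (induction j)
  case 0 then show ?case by simp
next
  case (Suc j)
  show ?case
  proof (cases "i = Suc j")
    case True then show ?thesis by simp
  next
    case False
    then have "q j dvd q i" using Suc by simp
    moreover have "q (Suc j) dvd q j" using assms(1) Suc.prems by simp
    ultimately show ?thesis by (rule dvd_trans[rotated])
  qed
qed

definition PA :: "(nat \<Rightarrow> complex) list \<Rightarrow> nat \<Rightarrow> nat list \<Rightarrow> complex" where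
  "PA g n1 D = (\<Prod>i<length D + 1. arith_at (g!i) ((n1 # D @ [1])!i) ((n1 # D @ [1])!(i+1)))"

definition Pg :: "nat list \<Rightarrow> nat list \<Rightarrow> complex" where
  "Pg gam D = (\<Prod>j<length gam. a_pow (gam!j) (D!j))"

definition Ind :: "nat list \<Rightarrow> nat list \<Rightarrow> complex" where
  "Ind D x = (\<Prod>j<length D. if D!j dvd x!j then 1 else 0)"

definition Dv :: "nat \<Rightarrow> nat \<Rightarrow> nat list set" where
  "Dv m n1 = {D. length D = m \<and> (\<forall>d\<in>set D. d dvd n1)}"

lemma finite_Dv: "0 < n1 \<Longrightarrow> finite (Dv m n1)"
  unfolding Dv_def
  by (rule finite_subset[OF _ finite_lists_length_eq[OF finite_atMost[of n1], of m]])
     (auto intro: dvd_imp_le)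

lemma PA_chain:
  assumes "PA g n1 D \<noteq> 0"
  shows "(\<forall>j<length D. D!j dvd n1) \<and> (\<forall>i j. i \<le> j \<longrightarrow> j < length D \<longrightarrow> D!j dvd D!i)"
proof -
  define Q where "Q = n1 # D @ [1]"
  have "\<forall>k<length D + 1. Q!(Suc k) dvd Q!k"
  proof (intro allI impI)
    fix k assume k: "k < length D + 1"
    have nz: "\<not> (\<exists>i\<in>{..<length D + 1}. arith_at (g!i) (Q!i) (Q!(i+1)) = 0)"
      using assms prod_zero_iff[OF finite_lessThan, of "\<lambda>i. arith_at (g!i) (Q!i) (Q!(i+1))" "length D + 1"]
      unfolding PA_def Q_def by blast
    have "arith_at (g!k) (Q!k) (Q!(k+1)) \<noteq> 0"
      using nz k by blast
    then show "Q!(Suc k) dvd Q!k" unfolding arith_at_def by (auto split: if_splits)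
  qed
  note c = chain_dvd[OF this]
  have 1: "D!j dvd n1" if "j < length D" for j
    using c[of 0 "Suc j"] that unfolding Q_def by (simp add: nth_append)
  have 2: "D!j dvd D!i" if "i \<le> j" "j < length D" for i j
    using c[of "Suc i" "Suc j"] that unfolding Q_def by (simp add: nth_append)
  show ?thesis using 1 2 by blast
qed

lemma gcd_cond:
  fixes x :: "nat list"
  assumes "j < length x"
  shows "(a dvd Gcd (set (take (j+2) (n1 # x)))) \<longleftrightarrow> (a dvd n1 \<and> (\<forall>i\<le>j. a dvd x!i))"
proof -
  have "set (take (j+2) (n1 # x)) = insert n1 (set (take (j+1) x))" by simp
  moreover have "set (take (j+1) x) = {x!i | i. i \<le> j}"
    using assms by (auto simp: set_conv_nth nth_take) (metis le_imp_less_Suc less_le_trans nth_take le_eq_less_or_eq Suc_eq_plus1 add_le_cancel_right le_trans less_Suc_eq_le)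
  ultimately show ?thesis by (auto simp: dvd_Gcd_iff)
qed


lemma a_pow_pow: "0 < r \<Longrightarrow> a_pow g (r ^ g) = 1"
  unfolding a_pow_def by auto

lemma a_pow_nz: "a_pow g d \<noteq> 0 \<Longrightarrow> \<exists>r. 0 < r \<and> r ^ g = d"
  unfolding a_pow_def by (auto split: if_splits)

lemma S_fun_repr:
  fixes gam :: "nat list" and x :: "nat list" and \<eta> :: "nat list \<Rightarrow> complex"
    and g :: "(nat \<Rightarrow> complex) list"
  assumes len: "length gam = m" and gam1: "\<forall>g\<in>set gam. g \<ge> 1" and n10: "0 < n1"
    and lenx: "length x = m"
  shows "S_fun gam \<eta> g (n1 # x) = (\<Sum>D\<in>Dv m n1. Pg gam D * (\<eta> D * PA g n1 D) * Ind D x)"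
proof -
  define SS where "SS = {ds. length ds = m \<and>
              (\<forall>j<m. 0 < ds ! j \<and> (ds ! j) ^ (gam ! j) dvd Gcd (set (take (j + 2) (n1 # x))))}"
  define \<Phi> where "\<Phi> ds = map (\<lambda>j. (ds ! j) ^ (gam ! j)) [0..<m]" for ds :: "nat list"
  have len\<Phi>: "length (\<Phi> ds) = m" for ds unfolding \<Phi>_def by simp
  have nth\<Phi>: "j < m \<Longrightarrow> \<Phi> ds ! j = (ds ! j) ^ (gam ! j)" for ds j unfolding \<Phi>_def by simp
  have gpos: "j < m \<Longrightarrow> 0 < gam ! j" for j using gam1 len by (metis nth_mem less_le_trans zero_less_one)
  have "S_fun gam \<eta> g (n1 # x) = (\<Sum>ds\<in>SS. \<eta> (\<Phi> ds) * PA g n1 (\<Phi> ds))"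
    unfolding S_fun_def SS_def PA_def Let_def len \<Phi>_def[symmetric] using len\<Phi> by simp
  also have "\<dots> = (\<Sum>D\<in>\<Phi> ` SS. \<eta> D * PA g n1 D)"
  proof (rule sum.reindex[symmetric, unfolded comp_def])
    show "inj_on \<Phi> SS"
    proof (rule inj_onI)
      fix a b assume a: "a \<in> SS" and b: "b \<in> SS" and e: "\<Phi> a = \<Phi> b"
      show "a = b"
      proof (rule nth_equalityI)
        show "length a = length b" using a b unfolding SS_def by simp
        fix j assume "j < length a"
        then have j: "j < m" using a unfolding SS_def by simp
        have "(a ! j) ^ (gam ! j) = (b ! j) ^ (gam ! j)" using e nth\<Phi>[OF j] by metis
        then show "a ! j = b ! j" using gpos[OF j] by (simp add: power_eq_iff_eq_base)
      qed
    qed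
  qed
  also have "\<dots> = (\<Sum>D\<in>Dv m n1. Pg gam D * (\<eta> D * PA g n1 D) * Ind D x)"
  proof (rule sum.mono_neutral_cong_left[OF finite_Dv[OF n10]])
    show "\<Phi> ` SS \<subseteq> Dv m n1"
    proof
      fix D assume "D \<in> \<Phi> ` SS"
      then obtain ds where ds: "ds \<in> SS" "D = \<Phi> ds" by blast
      have "\<forall>j<m. D ! j dvd n1"
        using ds gcd_cond[of _ x] lenx unfolding SS_def by (auto simp: nth\<Phi>)
      then show "D \<in> Dv m n1" unfolding Dv_def using ds len\<Phi> by (auto simp: in_set_conv_nth)
    qed
  next
    show "\<forall>D\<in>Dv m n1 - \<Phi> ` SS. Pg gam D * (\<eta> D * PA g n1 D) * Ind D x = 0"
    proof (rule ballI, rule ccontr)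
      fix D assume D: "D \<in> Dv m n1 - \<Phi> ` SS" and nz: "Pg gam D * (\<eta> D * PA g n1 D) * Ind D x \<noteq> 0"
      have lenD: "length D = m" and Ddvd: "\<forall>j<m. D!j dvd n1" using D unfolding Dv_def by auto
      have Pnz: "Pg gam D \<noteq> 0" and PAnz: "PA g n1 D \<noteq> 0" and Inz: "Ind D x \<noteq> 0" using nz by auto
      have "\<forall>j<m. a_pow (gam!j) (D!j) \<noteq> 0"
        using Pnz unfolding Pg_def len by (auto simp: prod_zero_iff)
      then have "\<forall>j<m. \<exists>r. 0 < r \<and> r ^ (gam!j) = D!j" using a_pow_nz by blast
      then obtain r where r: "\<forall>j<m. 0 < r j \<and> r j ^ (gam!j) = D!j" by metis
      have Idv: "\<forall>j<m. D!j dvd x!j"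
        using Inz unfolding Ind_def lenD by (auto simp: prod_zero_iff split: if_splits)
      have ch: "\<forall>i j. i \<le> j \<longrightarrow> j < m \<longrightarrow> D!j dvd D!i" using PA_chain[OF PAnz] lenD by blast
      define ds where "ds = map r [0..<m]"
      have "\<Phi> ds = D" by (rule nth_equalityI) (auto simp: len\<Phi> lenD nth\<Phi> ds_def r)
      moreover have "ds \<in> SS"
        unfolding SS_def
      proof (intro CollectI conjI allI impI)
        show "length ds = m" unfolding ds_def by simp
      next
        fix j assume j: "j < m"
        show "0 < ds ! j" using r j unfolding ds_def by simp
        have "ds ! j ^ (gam ! j) = D ! j" using r j unfolding ds_def by simp
        moreover have "D ! j dvd Gcd (set (take (j + 2) (n1 # x)))"
        proof (subst gcd_cond)
          show "j < length x" using j lenx by simp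
          show "D ! j dvd n1 \<and> (\<forall>i\<le>j. D ! j dvd x ! i)"
            using Ddvd j ch Idv by (meson dvd_trans le_less_trans)
        qed
        ultimately show "ds ! j ^ (gam ! j) dvd Gcd (set (take (j + 2) (n1 # x)))" by simp
      qed
      ultimately show False using D by blast
    qed
  next
    fix D assume "D \<in> \<Phi> ` SS"
    then obtain ds where ds: "ds \<in> SS" "D = \<Phi> ds" by blast
    have "Pg gam D = 1" unfolding Pg_def len
      using ds unfolding SS_def by (auto simp: nth\<Phi> a_pow_pow intro!: prod.neutral)
    moreover have "Ind D x = 1" unfolding Ind_def
      using ds gcd_cond[of _ x] lenx unfolding SS_def by (auto simp: nth\<Phi> len\<Phi> intro!: prod.neutral)
    ultimately show "\<eta> D * PA g n1 D = Pg gam D * (\<eta> D * PA g n1 D) * Ind D x" by simp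
  qed
  finally show ?thesis .
qed


lemma tele1:
  fixes qc :: "nat \<Rightarrow> complex"
  assumes "\<forall>k\<le>n. qc k \<noteq> 0"
  shows "(\<Prod>k<n. qc k / qc (Suc k)) = qc 0 / qc n"
  using assms
proof (induction n)
  case 0 then show ?case by simp
next
  case (Suc n)
  then show ?case by (simp add: field_simps)
qed

lemma tele2:
  fixes qc :: "nat \<Rightarrow> complex"
  assumes "\<forall>k\<le>Suc m. qc k \<noteq> 0"
  shows "(\<Prod>k<Suc m. (qc k / qc (Suc k)) ^ (m - k)) = qc 0 ^ m / (\<Prod>k<m. qc (Suc k))"
  using assms
proof (induction m)
  case 0 then show ?case by simp
next
  case (Suc m)
  have "(\<Prod>k<Suc (Suc m). (qc k / qc (Suc k)) ^ (Suc m - k))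
      = (\<Prod>k<Suc m. (qc k / qc (Suc k)) ^ (Suc m - k))" by simp
  also have "\<dots> = (\<Prod>k<Suc m. (qc k / qc (Suc k)) ^ (m - k) * (qc k / qc (Suc k)))"
    by (intro prod.cong refl) (simp add: Suc_diff_le power_Suc2)
  also have "\<dots> = (\<Prod>k<Suc m. (qc k / qc (Suc k)) ^ (m - k)) * (\<Prod>k<Suc m. qc k / qc (Suc k))"
    by (rule prod.distrib)
  also have "\<dots> = qc 0 ^ m / (\<Prod>k<m. qc (Suc k)) * (qc 0 / qc (Suc m))"
    using Suc.IH Suc.prems tele1[of "Suc m" qc] by simp
  also have "\<dots> = qc 0 ^ Suc m / (\<Prod>k<Suc m. qc (Suc k))" 
    using Suc.prems by (simp add: field_simps)
  finally show ?case .
qed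

lemma div_dvd_iff:
  fixes n a b :: nat
  assumes "a dvd n" "b dvd n" "0 < n"
  shows "(n div b) dvd (n div a) \<longleftrightarrow> a dvd b"
    and "a dvd b \<Longrightarrow> (n div a) div (n div b) = b div a"
proof -
  obtain a' where a': "n = a * a'" using assms by blast
  obtain b' where b': "n = b * b'" using assms by blast
  have a0: "0 < a" "0 < a'" "0 < b" "0 < b'" using a' b' assms(3) by (metis mult_is_0 neq0_conv)+
  have na1: "n div a = a'" using a0 unfolding a' by simp
  have na2: "n div b = b'" using a0 unfolding b' by simp
  note na = na1 na2
  have key: "a' = b' * t" if "b = a * t" for t
  proof -
    have "a * a' = n" using a' by simp
    also have "n = b * b'" by (rule b')
    also have "\<dots> = a * (b' * t)" using that by (simp add: algebra_simps)
    finally show ?thesis using a0 by simp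
  qed
  show "(n div b) dvd (n div a) \<longleftrightarrow> a dvd b"
  proof
    assume "n div b dvd n div a"
    then obtain s where s: "a' = b' * s" using na by blast
    have "b * b' = n" using b' by simp
    also have "n = a * a'" by (rule a')
    also have "\<dots> = (a * s) * b'" using s by (simp add: algebra_simps)
    finally have "b = a * s" using a0 by simp
    then show "a dvd b" by simp
  next
    assume "a dvd b"
    then obtain t where "b = a * t" by blast
    then have "a' = b' * t" by (rule key)
    then show "n div b dvd n div a" using na by simp
  qed
  assume "a dvd b"
  then obtain t where t: "b = a * t" by blast
  have "a' = b' * t" using key[OF t] .
  then show "(n div a) div (n div b) = b div a" using na t a0 by simp
qed

definition Psi :: "nat \<Rightarrow> nat list \<Rightarrow> nat list" where
  "Psi n1 D = map (\<lambda>d. n1 div d) (rev D)"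

lemma Psi_Dv: "0 < n1 \<Longrightarrow> D \<in> Dv m n1 \<Longrightarrow> Psi n1 D \<in> Dv m n1"
proof -
  assume a: "D \<in> Dv m n1"
  have h: "d dvd n1 \<Longrightarrow> (n1 div d) dvd n1" for d :: nat by (metis dvd_mult_div_cancel dvd_triv_right)
  have "\<forall>y\<in>set (Psi n1 D). y dvd n1"
  proof
    fix y assume "y \<in> set (Psi n1 D)"
    then obtain d where "d \<in> set D" "y = n1 div d" unfolding Psi_def by auto
    then show "y dvd n1" using a h unfolding Dv_def by blast
  qed
  moreover have "length (Psi n1 D) = m" using a unfolding Psi_def Dv_def by simp
  ultimately show ?thesis unfolding Dv_def by blast
qed

lemma div_div_self':
  fixes n d :: nat
  assumes "0 < n" "d dvd n"
  shows "n div (n div d) = d"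
proof -
  obtain k where k: "n = d * k" using assms by blast
  then have "0 < d" "0 < k" using assms by auto
  then show ?thesis unfolding k by simp
qed

lemma Psi_Psi: "0 < n1 \<Longrightarrow> D \<in> Dv m n1 \<Longrightarrow> Psi n1 (Psi n1 D) = D"
proof -
  assume a: "0 < n1" "D \<in> Dv m n1"
  have "Psi n1 (Psi n1 D) = map (\<lambda>d. n1 div (n1 div d)) D"
    unfolding Psi_def by (simp add: rev_map[symmetric])
  also have "\<dots> = D" using a unfolding Dv_def by (intro map_idI) (simp add: div_div_self')
  finally show ?thesis .
qed

lemma Psi_nth: "j < length D \<Longrightarrow> Psi n1 D ! j = n1 div D ! (length D - Suc j)"
  unfolding Psi_def by (simp add: rev_nth)

lemma xi_Psi:
  assumes "0 < n1" "D \<in> Dv m n1" "length gam = m"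
  shows "xi_t gam \<xi> n1 (Psi n1 D) = Pg gam D * \<xi> D"
proof -
  have lenD: "length D = m" and dv: "\<forall>j<m. D!j dvd n1" using assms(2) unfolding Dv_def by auto
  have "map (\<lambda>d. n1 div d) (rev (Psi n1 D)) = Psi n1 (Psi n1 D)" unfolding Psi_def ..
  also have "\<dots> = D" using Psi_Psi assms by blast
  finally have 1: "map (\<lambda>d. n1 div d) (rev (Psi n1 D)) = D" .
  have 2: "n1 div (Psi n1 D ! (m - 1 - j)) = D ! j" if "j < m" for j
  proof -
    have "Psi n1 D ! (m - 1 - j) = n1 div D ! j" using that lenD by (simp add: Psi_nth)
    then show ?thesis using dv that assms(1) by (simp add: div_div_self')
  qed
  show ?thesis unfolding xi_t_def Pg_def Let_def 1 assms(3) using 2 by simp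
qed

lemma Ind_Psi:
  assumes "D \<in> Dv m n1" "length ls = m"
  shows "Ind (Psi n1 D) (rev ls) = (\<Prod>j<m. if (n1 div D!j) dvd ls!j then 1 else 0)"
proof -
  have lenD: "length D = m" using assms unfolding Dv_def by auto
  have "Ind (Psi n1 D) (rev ls) = (\<Prod>j<m. (\<lambda>k. if (n1 div D!k) dvd ls!k then 1 else 0) (m - Suc j))"
    unfolding Ind_def Psi_def using lenD assms(2) by (intro prod.cong) (auto simp: rev_nth)
  also have "\<dots> = (\<Prod>j<m. if (n1 div D!j) dvd ls!j then 1 else 0)" by (rule prod.nat_diff_reindex)
  finally show ?thesis .
qed


lemma of_nat_div_dvd: "b dvd a \<Longrightarrow> (of_nat (a div b) :: complex) = of_nat a / of_nat b"
  by (cases "b = 0") (auto elim!: dvdE)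

lemma PA_Psi:
  assumes n10: "0 < n1" and D: "D \<in> Dv m n1" and lenf: "length f = m + 1"
  shows "PA (f_tilde_t f) n1 (Psi n1 D) / of_nat n1 ^ m = (\<Prod>j<m. 1 / of_nat (D!j)) * PA f n1 D"
proof -
  have lenD: "length D = m" and dv: "\<forall>j<m. D!j dvd n1" using D unfolding Dv_def by auto
  define q where "q k = (n1 # D @ [1]) ! k" for k
  have q0: "q 0 = n1" unfolding q_def by simp
  have qS: "j < m \<Longrightarrow> q (Suc j) = D ! j" for j unfolding q_def using lenD by (simp add: nth_append)
  have qm: "q (Suc m) = 1" unfolding q_def using lenD by (simp add: nth_append)
  have qdv: "q k dvd n1 \<and> 0 < q k" if "k \<le> Suc m" for k
  proof (cases k)
    case 0 then show ?thesis using q0 n10 by simp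
  next
    case (Suc j)
    show ?thesis
    proof (cases "j < m")
      case True
      then have "D!j dvd n1" using dv by simp
      then show ?thesis using Suc True qS n10 by (metis dvd_0_left_iff neq0_conv)
    next
      case False
      then have "j = m" using Suc that by simp
      then show ?thesis using Suc qm by simp
    qed
  qed
  have lenP: "length (Psi n1 D) = m" unfolding Psi_def using lenD by simp
  have Q': "(n1 # Psi n1 D @ [1]) ! i = n1 div q (Suc m - i)" if "i \<le> Suc m" for i
  proof (cases i)
    case 0 then show ?thesis using qm by simp
  next
    case (Suc j)
    show ?thesis
    proof (cases "j < m")
      case True
      have "(n1 # Psi n1 D @ [1]) ! i = Psi n1 D ! j" using Suc True lenP by (simp add: nth_append)
      also have "\<dots> = n1 div D ! (m - Suc j)" using True lenD by (simp add: Psi_nth)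
      also have "D ! (m - Suc j) = q (Suc m - i)" using Suc True qS[of "m - Suc j"] by (simp add: Suc_diff_Suc)
      finally show ?thesis .
    next
      case False
      then have "j = m" using Suc that by simp
      then show ?thesis using Suc lenP q0 n10 by (simp add: nth_append)
    qed
  qed
  have tf: "f_tilde_t f ! i = (\<lambda>x. of_nat x ^ i * (f!(m-i)) x)" if "i \<le> m" for i
    unfolding f_tilde_t_def Let_def lenf using that by (simp del: upt_Suc)
  define r where "r k = (of_nat (q k div q (Suc k)) :: complex)" for k
  define a where "a k = arith_at (f!k) (q k) (q (Suc k))" for k
  have PAf: "PA f n1 D = (\<Prod>k<Suc m. a k)" unfolding PA_def a_def q_def lenD by simp
  have factor: "arith_at (f_tilde_t f ! i) ((n1 # Psi n1 D @ [1]) ! i) ((n1 # Psi n1 D @ [1]) ! (i+1))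
      = r (m - i) ^ i * a (m - i)" if "i \<le> m" for i
  proof -
    define A where "A = q (Suc (m - i))"
    define B where "B = q (m - i)"
    have e1: "(n1 # Psi n1 D @ [1]) ! i = n1 div A" unfolding A_def using Q'[of i] that by (simp add: Suc_diff_le)
    have e2: "(n1 # Psi n1 D @ [1]) ! (i+1) = n1 div B" unfolding B_def using Q'[of "i+1"] that by simp
    have Adv: "A dvd n1" "B dvd n1" unfolding A_def B_def using qdv that by auto
    have iff: "(n1 div B) dvd (n1 div A) \<longleftrightarrow> A dvd B" by (rule div_dvd_iff(1)[OF Adv n10])
    have rA: "r (m - i) = of_nat (B div A)" unfolding r_def A_def B_def ..
    have aA: "a (m - i) = arith_at (f!(m-i)) B A" unfolding a_def A_def B_def ..
    show ?thesis
    proof (cases "A dvd B")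
      case True
      have qq: "(n1 div A) div (n1 div B) = B div A" by (rule div_dvd_iff(2)[OF Adv n10 True])
      have "arith_at (f_tilde_t f ! i) (n1 div A) (n1 div B) = (f_tilde_t f ! i) (B div A)"
        unfolding arith_at_def using True iff qq by simp
      also have "\<dots> = of_nat (B div A) ^ i * (f!(m-i)) (B div A)" unfolding tf[OF that] ..
      also have "\<dots> = r (m - i) ^ i * a (m - i)" unfolding rA aA arith_at_def using True by simp
      finally show ?thesis unfolding e1 e2 .
    next
      case False
      have "arith_at (f_tilde_t f ! i) (n1 div A) (n1 div B) = 0"
        unfolding arith_at_def using False iff by simp
      moreover have "a (m - i) = 0" unfolding aA arith_at_def using False by simp
      ultimately show ?thesis unfolding e1 e2 by simp
    qed
  qed
  define h where "h k = r k ^ (m - k) * a k" for k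
  have "PA (f_tilde_t f) n1 (Psi n1 D) = (\<Prod>i<m+1. h (m - i))"
    unfolding PA_def lenP
  proof (intro prod.cong refl)
    fix i assume "i \<in> {..<m + 1}"
    then have i: "i \<le> m" by simp
    have "h (m - i) = r (m - i) ^ i * a (m - i)" unfolding h_def using i by simp
    then show "arith_at (f_tilde_t f ! i) ((n1 # Psi n1 D @ [1]) ! i) ((n1 # Psi n1 D @ [1]) ! (i + 1))
      = h (m - i)" using factor[OF i] by simp
  qed
  also have "\<dots> = (\<Prod>k<Suc m. h k)" using prod.nat_diff_reindex[of h "m+1"] by simp
  also have "\<dots> = (\<Prod>k<Suc m. r k ^ (m - k)) * PA f n1 D" unfolding h_def PAf by (rule prod.distrib)
  finally have PAt: "PA (f_tilde_t f) n1 (Psi n1 D) = (\<Prod>k<Suc m. r k ^ (m - k)) * PA f n1 D" .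
  show ?thesis
  proof (cases "PA f n1 D = 0")
    case True then show ?thesis using PAt by simp
  next
    case False
    then have "\<forall>k\<in>{..<Suc m}. a k \<noteq> 0" unfolding PAf by (simp del: prod.lessThan_Suc)
    then have adv: "k < Suc m \<Longrightarrow> q (Suc k) dvd q k" for k unfolding a_def arith_at_def
      by (auto split: if_splits)
    define qc where "qc k = (of_nat (q k) :: complex)" for k
    have "(\<Prod>k<Suc m. r k ^ (m - k)) = (\<Prod>k<Suc m. (qc k / qc (Suc k)) ^ (m - k))"
      by (intro prod.cong refl) (simp add: r_def qc_def of_nat_div_dvd adv)
    also have "\<dots> = qc 0 ^ m / (\<Prod>k<m. qc (Suc k))"
      by (rule tele2) (use qdv in \<open>auto simp: qc_def\<close>)
    also have "(\<Prod>k<m. qc (Suc k)) = (\<Prod>j<m. of_nat (D!j))"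
      by (intro prod.cong refl) (simp add: qc_def qS)
    finally have "(\<Prod>k<Suc m. r k ^ (m - k)) = of_nat n1 ^ m / (\<Prod>j<m. of_nat (D!j))"
      by (simp add: qc_def q0)
    then show ?thesis using PAt n10 by (simp add: prod_dividef)
  qed
qed


lemma Lset: "{ls. length ls = m \<and> set ls \<subseteq> A} = {ls. length ls = m \<and> (\<forall>j<m. ls!j \<in> A)}"
  by (auto simp: in_set_conv_nth subset_iff)

lemma Pg_one: "E \<in> Dv m n1 \<Longrightarrow> 0 < n1 \<Longrightarrow> Pg (replicate m 1) E = 1"
  unfolding Pg_def Dv_def
  by (auto intro!: prod.neutral simp: a_pow_def) (metis dvd_0_left_iff neq0_conv nth_mem)

lemma Ind_fourier:
  assumes n10: "0 < n1" and D: "D \<in> Dv m n1" and lenx: "length x = m"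
  shows "Ind D x = (\<Sum>ls\<in>{ls. length ls = m \<and> (\<forall>j<m. ls!j \<in> {1..n1})}.
      ((\<Prod>j<m. 1 / of_nat (D!j)) * (\<Prod>j<m. if (n1 div D!j) dvd ls!j then 1 else 0))
      * (\<Prod>j<m. e_fun n1 (x!j * ls!j)))"
proof -
  have lenD: "length D = m" and dv: "\<forall>j<m. D!j dvd n1" using D unfolding Dv_def by auto
  have pos: "j < m \<Longrightarrow> 0 < D!j" for j using dv n10 by (metis dvd_0_left_iff neq0_conv)
  have "Ind D x = (\<Prod>j<m. \<Sum>l\<in>{1..n1}. (1 / of_nat (D!j)) * (if (n1 div D!j) dvd l then e_fun n1 (x!j * l) else 0))"
    unfolding Ind_def lenD
  proof (intro prod.cong refl)
    fix j assume "j \<in> {..<m}"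
    then have j: "j < m" by simp
    have "(\<Sum>l\<in>{1..n1}. (1 / of_nat (D!j)) * (if (n1 div D!j) dvd l then e_fun n1 (x!j * l) else 0))
       = (1 / of_nat (D!j)) * (\<Sum>l\<in>{1..n1}. (if (n1 div D!j) dvd l then e_fun n1 (x!j * l) else 0))"
      by (rule sum_distrib_left[symmetric])
    also have "\<dots> = (1 / of_nat (D!j)) * (if D!j dvd x!j then of_nat (D!j) else 0)"
      unfolding fourier[OF pos[OF j] dv[rule_format, OF j] n10, of "x!j"] ..
    also have "\<dots> = (if D ! j dvd x ! j then 1 else 0)" using pos[OF j] by simp
    finally show "(if D ! j dvd x ! j then 1 else 0) = (\<Sum>l\<in>{1..n1}. (1 / of_nat (D!j)) * (if (n1 div D!j) dvd l then e_fun n1 (x!j * l) else 0))" by simp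
  qed
  also have "\<dots> = (\<Sum>ls\<in>{ls. length ls = m \<and> (\<forall>j<m. ls!j \<in> {1..n1})}.
      \<Prod>j<m. (1 / of_nat (D!j)) * (if (n1 div D!j) dvd ls!j then e_fun n1 (x!j * ls!j) else 0))"
    by (rule prod_sum_lists)
  also have "\<dots> = (\<Sum>ls\<in>{ls. length ls = m \<and> (\<forall>j<m. ls!j \<in> {1..n1})}.
      ((\<Prod>j<m. 1 / of_nat (D!j)) * (\<Prod>j<m. if (n1 div D!j) dvd ls!j then 1 else 0))
      * (\<Prod>j<m. e_fun n1 (x!j * ls!j)))"
  proof (intro sum.cong refl)
    fix ls
    have "(\<Prod>j<m. (1 / of_nat (D!j)) * (if (n1 div D!j) dvd ls!j then e_fun n1 (x!j * ls!j) else 0))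
       = (\<Prod>j<m. (1 / of_nat (D!j)) * (if (n1 div D!j) dvd ls!j then 1 else 0) * e_fun n1 (x!j * ls!j))"
      by (intro prod.cong refl) simp
    also have "\<dots> = ((\<Prod>j<m. 1 / of_nat (D!j)) * (\<Prod>j<m. if (n1 div D!j) dvd ls!j then 1 else 0))
      * (\<Prod>j<m. e_fun n1 (x!j * ls!j))"
      by (simp only: prod.distrib)
    finally show "(\<Prod>j<m. (1 / of_nat (D!j)) * (if (n1 div D!j) dvd ls!j then e_fun n1 (x!j * ls!j) else 0))
      = ((\<Prod>j<m. 1 / of_nat (D!j)) * (\<Prod>j<m. if (n1 div D!j) dvd ls!j then 1 else 0))
      * (\<Prod>j<m. e_fun n1 (x!j * ls!j))" .
  qed
  finally show ?thesis .
qed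

lemma S1_coeff:
  fixes gam :: "nat list" and f :: "(nat \<Rightarrow> complex) list" and \<xi> :: "nat list \<Rightarrow> complex"
  assumes len: "length gam = m" and lenf: "length f = m + 1" and n10: "0 < n1" and lenls: "length ls = m"
  shows "S1_fun m (xi_t gam \<xi> n1) (f_tilde_t f) (n1 # rev ls) / of_nat n1 ^ m
    = (\<Sum>D\<in>Dv m n1. Pg gam D * (\<xi> D * PA f n1 D) * ((\<Prod>j<m. 1 / of_nat (D!j)) * (\<Prod>j<m. if (n1 div D!j) dvd ls!j then 1 else 0)))"
proof -
  have "S1_fun m (xi_t gam \<xi> n1) (f_tilde_t f) (n1 # rev ls)
     = (\<Sum>E\<in>Dv m n1. Pg (replicate m 1) E * (xi_t gam \<xi> n1 E * PA (f_tilde_t f) n1 E) * Ind E (rev ls))"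
    unfolding S1_fun_def by (rule S_fun_repr) (use n10 lenls in auto)
  also have "\<dots> = (\<Sum>E\<in>Dv m n1. xi_t gam \<xi> n1 E * PA (f_tilde_t f) n1 E * Ind E (rev ls))"
  proof (intro sum.cong refl)
    fix E assume E: "E \<in> Dv m n1"
    show "Pg (replicate m 1) E * (xi_t gam \<xi> n1 E * PA (f_tilde_t f) n1 E) * Ind E (rev ls)
       = xi_t gam \<xi> n1 E * PA (f_tilde_t f) n1 E * Ind E (rev ls)"
      by (simp only: Pg_one[OF E n10] mult_1)
  qed
  also have "\<dots> = (\<Sum>D\<in>Dv m n1. xi_t gam \<xi> n1 (Psi n1 D) * PA (f_tilde_t f) n1 (Psi n1 D) * Ind (Psi n1 D) (rev ls))"
    by (rule sum.reindex_bij_witness[of _ "Psi n1" "Psi n1"]) (use n10 Psi_Psi Psi_Dv in auto)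
  finally have "S1_fun m (xi_t gam \<xi> n1) (f_tilde_t f) (n1 # rev ls) / of_nat n1 ^ m
     = (\<Sum>D\<in>Dv m n1. xi_t gam \<xi> n1 (Psi n1 D) * PA (f_tilde_t f) n1 (Psi n1 D) * Ind (Psi n1 D) (rev ls)) / of_nat n1 ^ m"
    by simp
  also have "\<dots> = (\<Sum>D\<in>Dv m n1. xi_t gam \<xi> n1 (Psi n1 D) * (PA (f_tilde_t f) n1 (Psi n1 D) / of_nat n1 ^ m) * Ind (Psi n1 D) (rev ls))"
    by (simp add: sum_divide_distrib)
  also have "\<dots> = (\<Sum>D\<in>Dv m n1. Pg gam D * (\<xi> D * PA f n1 D) * ((\<Prod>j<m. 1 / of_nat (D!j)) * (\<Prod>j<m. if (n1 div D!j) dvd ls!j then 1 else 0)))"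
  proof (intro sum.cong refl)
    fix D assume D: "D \<in> Dv m n1"
    show "xi_t gam \<xi> n1 (Psi n1 D) * (PA (f_tilde_t f) n1 (Psi n1 D) / of_nat n1 ^ m) * Ind (Psi n1 D) (rev ls)
      = Pg gam D * (\<xi> D * PA f n1 D) * ((\<Prod>j<m. 1 / of_nat (D!j)) * (\<Prod>j<m. if (n1 div D!j) dvd ls!j then 1 else 0))"
      unfolding xi_Psi[OF n10 D len] PA_Psi[OF n10 D lenf] Ind_Psi[OF D lenls] by (simp add: ac_simps)
  qed
  finally show ?thesis .
qed


lemma part1:
  fixes m :: nat and gam :: "nat list" and f :: "(nat \<Rightarrow> complex) list"
    and \<xi> :: "nat list \<Rightarrow> complex" and n1 :: nat and ns :: "nat list"
  assumes len: "length gam = m" and gam1: "\<forall>g\<in>set gam. g \<ge> 1"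
    and lenf: "length f = m + 1" and n10: "0 < n1" and lenns: "length ns = m"
  shows "S_fun gam \<xi> f (n1 # ns) =
           (\<Sum>ls\<in>{ls. length ls = m \<and> set ls \<subseteq> {1..n1}}.
              (S1_fun m (xi_t gam \<xi> n1) (f_tilde_t f) (n1 # rev ls) / of_nat n1 ^ m)
              * (\<Prod>i<m. e_fun n1 (ns ! i * ls ! i)))"
proof -
  define L where "L = {ls. length ls = m \<and> (\<forall>j<m. ls!j \<in> {1..n1})}"
  define W where "W D = Pg gam D * (\<xi> D * PA f n1 D)" for D
  define C where "C D ls = (\<Prod>j<m. 1 / of_nat (D!j)) * (\<Prod>j<m. if (n1 div D!j) dvd ls!j then 1 else (0::complex))" for D ls
  define E where "E ls = (\<Prod>i<m. e_fun n1 (ns ! i * ls ! i))" for ls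
  have "S_fun gam \<xi> f (n1 # ns) = (\<Sum>D\<in>Dv m n1. W D * Ind D ns)"
    unfolding W_def by (rule S_fun_repr[OF len gam1 n10 lenns])
  also have "\<dots> = (\<Sum>D\<in>Dv m n1. \<Sum>ls\<in>L. W D * C D ls * E ls)"
  proof (intro sum.cong refl)
    fix D assume D: "D \<in> Dv m n1"
    show "W D * Ind D ns = (\<Sum>ls\<in>L. W D * C D ls * E ls)"
      unfolding Ind_fourier[OF n10 D lenns] L_def C_def E_def by (simp add: sum_distrib_left mult.assoc)
  qed
  also have "\<dots> = (\<Sum>ls\<in>L. \<Sum>D\<in>Dv m n1. W D * C D ls * E ls)" by (rule sum.swap)
  also have "\<dots> = (\<Sum>ls\<in>L. (S1_fun m (xi_t gam \<xi> n1) (f_tilde_t f) (n1 # rev ls) / of_nat n1 ^ m) * E ls)"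
  proof (intro sum.cong refl)
    fix ls assume "ls \<in> L"
    then have lenls: "length ls = m" unfolding L_def by simp
    show "(\<Sum>D\<in>Dv m n1. W D * C D ls * E ls) = (S1_fun m (xi_t gam \<xi> n1) (f_tilde_t f) (n1 # rev ls) / of_nat n1 ^ m) * E ls"
      unfolding S1_coeff[OF len lenf n10 lenls] W_def C_def by (simp add: sum_distrib_right)
  qed
  finally show ?thesis unfolding L_def E_def Lset .
qed


lemma S1_gcd:
  assumes n10: "0 < n1" and lenls: "length ls = m"
  shows "S1_fun m \<eta> g (n1 # rev ls) = S1_fun m \<eta> g (n1 # rev (map (gcd n1) ls))"
proof -
  have r: "S1_fun m \<eta> g (n1 # x) = (\<Sum>E\<in>Dv m n1. Pg (replicate m 1) E * (\<eta> E * PA g n1 E) * Ind E x)"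
    if "length x = m" for x
    unfolding S1_fun_def by (rule S_fun_repr) (use n10 that in auto)
  have IndEq: "Ind E (rev ls) = Ind E (rev (map (gcd n1) ls))" if E: "E \<in> Dv m n1" for E
    unfolding Ind_def
  proof (intro prod.cong refl)
    fix j assume "j \<in> {..<length E}"
    then have j: "j < m" using E unfolding Dv_def by simp
    have "E!j dvd n1" using E j unfolding Dv_def by auto
    moreover have "rev (map (gcd n1) ls) ! j = gcd n1 (rev ls ! j)" using j lenls by (simp add: rev_map)
    ultimately show "(if E ! j dvd rev ls ! j then 1 else 0) = (if E ! j dvd rev (map (gcd n1) ls) ! j then 1 else (0::complex))"
      by simp
  qed
  have "(\<Sum>E\<in>Dv m n1. Pg (replicate m 1) E * (\<eta> E * PA g n1 E) * Ind E (rev ls))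
      = (\<Sum>E\<in>Dv m n1. Pg (replicate m 1) E * (\<eta> E * PA g n1 E) * Ind E (rev (map (gcd n1) ls)))"
    by (intro sum.cong refl) (simp only: IndEq)
  then show ?thesis using r[of "rev ls"] r[of "rev (map (gcd n1) ls)"] lenls by simp
qed

lemma part2:
  fixes m :: nat and gam :: "nat list" and f :: "(nat \<Rightarrow> complex) list"
    and \<xi> :: "nat list \<Rightarrow> complex" and n1 :: nat and ns :: "nat list"
  assumes n10: "0 < n1" and lenns: "length ns = m"
  shows "(\<Sum>ls\<in>{ls. length ls = m \<and> set ls \<subseteq> {1..n1}}.
              (S1_fun m (xi_t gam \<xi> n1) (f_tilde_t f) (n1 # rev ls) / of_nat n1 ^ m)
              * (\<Prod>i<m. e_fun n1 (ns ! i * ls ! i))) =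
           (\<Sum>ds\<in>{ds. length ds = m \<and> (\<forall>d\<in>set ds. d dvd n1)}.
              (S1_fun m (xi_t gam \<xi> n1) (f_tilde_t f) (n1 # map (\<lambda>d. n1 div d) (rev ds)) / of_nat n1 ^ m)
              * (\<Prod>i<m. ramanujan (ds ! i) (ns ! i)))"
proof -
  define L where "L = {ls. length ls = m \<and> set ls \<subseteq> {1..n1}}"
  define A where "A ls = S1_fun m (xi_t gam \<xi> n1) (f_tilde_t f) (n1 # rev ls) / of_nat n1 ^ m" for ls
  define E where "E ls = (\<Prod>i<m. e_fun n1 (ns ! i * ls ! i))" for ls
  define G where "G ls = map (\<lambda>l. n1 div gcd n1 l) ls" for ls
  have finL: "finite L" unfolding L_def using finite_lists_length_eq[of "{1..n1}" m] by (simp add: conj_commute)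
  have GL: "G ` L \<subseteq> Dv m n1" unfolding G_def L_def Dv_def
    by (auto simp: div_dvd_div[symmetric]) (metis dvd_mult_div_cancel dvd_triv_right gcd_dvd1)
  have "(\<Sum>ls\<in>L. A ls * E ls) = (\<Sum>ds\<in>Dv m n1. \<Sum>ls\<in>{x\<in>L. G x = ds}. A ls * E ls)"
    by (rule sum.group[OF finL finite_Dv[OF n10] GL, symmetric])
  also have "\<dots> = (\<Sum>ds\<in>Dv m n1. A (map (\<lambda>d. n1 div d) ds) * (\<Prod>i<m. ramanujan (ds ! i) (ns ! i)))"
  proof (intro sum.cong refl)
    fix ds assume ds: "ds \<in> Dv m n1"
    have lends: "length ds = m" and dsdv: "\<forall>j<m. ds!j dvd n1" using ds unfolding Dv_def by auto
    define F where "F = {ls. length ls = m \<and> (\<forall>j<m. ls!j \<in> {l\<in>{1..n1}. n1 div gcd n1 l = ds!j})}"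
    have FF: "{x\<in>L. G x = ds} = F"
      unfolding L_def Lset F_def G_def using lends
      by (auto simp: list_eq_iff_nth_eq)
    have Ax: "A x = A (map (\<lambda>d. n1 div d) ds)" if x: "x \<in> F" for x
    proof -
      have lenx: "length x = m" using x unfolding F_def by simp
      have "map (gcd n1) x = map (\<lambda>d. n1 div d) ds"
      proof (rule nth_equalityI)
        show "length (map (gcd n1) x) = length (map (\<lambda>d. n1 div d) ds)" using lenx lends by simp
        fix j assume "j < length (map (gcd n1) x)"
        then have j: "j < m" using lenx by simp
        have "n1 div gcd n1 (x!j) = ds!j" using x j unfolding F_def by auto
        then have "n1 div ds!j = gcd n1 (x!j)" using div_div_self'[OF n10, of "gcd n1 (x!j)"] by simp
        then show "map (gcd n1) x ! j = map (\<lambda>d. n1 div d) ds ! j" using j lenx lends by simp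
      qed
      then show ?thesis unfolding A_def using S1_gcd[OF n10 lenx] by simp
    qed
    have "(\<Sum>ls\<in>{x\<in>L. G x = ds}. A ls * E ls) = (\<Sum>ls\<in>F. A (map (\<lambda>d. n1 div d) ds) * E ls)"
      unfolding FF by (intro sum.cong refl) (simp add: Ax)
    also have "\<dots> = A (map (\<lambda>d. n1 div d) ds) * (\<Sum>ls\<in>F. E ls)" by (simp add: sum_distrib_left)
    also have "(\<Sum>ls\<in>F. E ls) = (\<Prod>i<m. \<Sum>l\<in>{l\<in>{1..n1}. n1 div gcd n1 l = ds!i}. e_fun n1 (ns ! i * l))"
      unfolding F_def E_def by (rule prod_sum_lists[symmetric])
    also have "\<dots> = (\<Prod>i<m. ramanujan (ds ! i) (ns ! i))"
    proof (intro prod.cong refl)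
      fix i assume "i \<in> {..<m}"
      then have i: "i < m" by simp
      have "(\<Sum>l\<in>{l\<in>{1..n1}. n1 div gcd n1 l = ds!i}. e_fun n1 (ns ! i * l))
          = (\<Sum>l\<in>{1..n1}. if n1 div gcd n1 l = ds!i then e_fun n1 (ns ! i * l) else 0)"
        by (rule sum.inter_filter) simp
      also have "\<dots> = ramanujan (ds ! i) (ns ! i)"
        by (rule ramanujan_sum[OF n10 dsdv[rule_format, OF i]])
      finally show "(\<Sum>l\<in>{l\<in>{1..n1}. n1 div gcd n1 l = ds!i}. e_fun n1 (ns ! i * l)) = ramanujan (ds ! i) (ns ! i)" .
    qed
    finally show "(\<Sum>ls\<in>{x\<in>L. G x = ds}. A ls * E ls) = A (map (\<lambda>d. n1 div d) ds) * (\<Prod>i<m. ramanujan (ds ! i) (ns ! i))" .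
  qed
  finally show ?thesis unfolding L_def A_def E_def Dv_def by (simp add: rev_map)
qed


theorem theorem2p7:
  fixes m :: nat and gam :: "nat list" and f :: "(nat \<Rightarrow> complex) list"
    and \<xi> :: "nat list \<Rightarrow> complex" and n1 :: nat and ns :: "nat list"
  assumes "m \<ge> 1"
    and "length gam = m" and "\<forall>g\<in>set gam. g \<ge> 1"
    and "length f = m + 1"
    and "n1 \<ge> 1"
    and "length ns = m" and "\<forall>n\<in>set ns. n \<ge> 1"
  shows "(S_fun gam \<xi> f (n1 # ns) =
           (\<Sum>ls\<in>{ls. length ls = m \<and> set ls \<subseteq> {1..n1}}.
              (S1_fun m (xi_t gam \<xi> n1) (f_tilde_t f) (n1 # rev ls) / of_nat n1 ^ m)
              * (\<Prod>i<m. e_fun n1 (ns ! i * ls ! i))))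
       \<and> (S_fun gam \<xi> f (n1 # ns) =
           (\<Sum>ds\<in>{ds. length ds = m \<and> (\<forall>d\<in>set ds. d dvd n1)}.
              (S1_fun m (xi_t gam \<xi> n1) (f_tilde_t f) (n1 # map (\<lambda>d. n1 div d) (rev ds)) / of_nat n1 ^ m)
              * (\<Prod>i<m. ramanujan (ds ! i) (ns ! i))))"
proof -
  have n10: "0 < n1" using assms(5) by simp
  have p1: "S_fun gam \<xi> f (n1 # ns) =
           (\<Sum>ls\<in>{ls. length ls = m \<and> set ls \<subseteq> {1..n1}}.
              (S1_fun m (xi_t gam \<xi> n1) (f_tilde_t f) (n1 # rev ls) / of_nat n1 ^ m)
              * (\<Prod>i<m. e_fun n1 (ns ! i * ls ! i)))"
    by (rule part1[OF assms(2,3,4) n10 assms(6)])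
  show ?thesis using p1 part2[OF n10 assms(6), of gam \<xi> f] by simp
qed

end
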